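(* Let $(\mathfrak J,B)$ be a $B$-irreducible pseudo-euclidean Jordan algebra. Then its operator of Casimir type $R_c$ is either nilpotent or invertible.
   Context: All algebras are finite-dimensional over a field of characteristic zero. A Jordan algebra is a commutative algebra with $x(yx^2)=(xy)x^2$; $(\mathfrak J,B)$ is pseudo-euclidean if $B$ is nondegenerate symmetric with $B(xy,z)=B(x,yz)$. $(\mathfrak J,B)$ is $B$-irreducible if it has no nontrivial ideal $\mathcal I$ with $B|_{\mathcal I\times\mathcal I}$ nondegenerate. With bases $\{e_i\},\{e'_i\}$ of $\mathfrak J$ satisfying $B(e_i,e'_j)=\delta_{ij}$ and $c=\sum_ie_ie'_i$, the operator of Casimir type is $R_c(x)=xc$ (independent of the choice of such bases). *)

theory Defs
  imports Complex_Main
begin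

text \<open>A finite-dimensional Jordan algebra over a field of characteristic zero is modelled as
  a vector space (smult :: 'k \<Rightarrow> 'v \<Rightarrow> 'v) with a bilinear product mult.\<close>

definition fin_dim_space :: "('k::field \<Rightarrow> 'v::ab_group_add \<Rightarrow> 'v) \<Rightarrow> bool" where
  "fin_dim_space smult \<longleftrightarrow> vector_space smult \<and> (\<exists>S. finite S \<and> Modules.module.span smult S = UNIV)"

definition bilinear_map :: "('k::field \<Rightarrow> 'v::ab_group_add \<Rightarrow> 'v) \<Rightarrow> ('v \<Rightarrow> 'v \<Rightarrow> 'v) \<Rightarrow> bool" where
  "bilinear_map smult m \<longleftrightarrow> (\<forall>x. Vector_Spaces.linear smult smult (m x))
                              \<and> (\<forall>y. Vector_Spaces.linear smult smult (\<lambda>x. m x y))"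

definition jordan_algebra :: "('k::field_char_0 \<Rightarrow> 'v::ab_group_add \<Rightarrow> 'v) \<Rightarrow> ('v \<Rightarrow> 'v \<Rightarrow> 'v) \<Rightarrow> bool" where
  "jordan_algebra smult m \<longleftrightarrow> fin_dim_space smult \<and> bilinear_map smult m
     \<and> (\<forall>x y. m x y = m y x)
     \<and> (\<forall>x y. m x (m y (m x x)) = m (m x y) (m x x))"

definition bilinear_form :: "('k::field \<Rightarrow> 'v::ab_group_add \<Rightarrow> 'v) \<Rightarrow> ('v \<Rightarrow> 'v \<Rightarrow> 'k) \<Rightarrow> bool" where
  "bilinear_form smult B \<longleftrightarrow> (\<forall>x. Vector_Spaces.linear smult (*) (B x))
                              \<and> (\<forall>y. Vector_Spaces.linear smult (*) (\<lambda>x. B x y))"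

definition pseudo_euclidean_jordan ::
  "('k::field_char_0 \<Rightarrow> 'v::ab_group_add \<Rightarrow> 'v) \<Rightarrow> ('v \<Rightarrow> 'v \<Rightarrow> 'v) \<Rightarrow> ('v \<Rightarrow> 'v \<Rightarrow> 'k) \<Rightarrow> bool" where
  "pseudo_euclidean_jordan smult m B \<longleftrightarrow> jordan_algebra smult m \<and> bilinear_form smult B
     \<and> (\<forall>x y. B x y = B y x)
     \<and> (\<forall>x. (\<forall>y. B x y = 0) \<longrightarrow> x = 0)
     \<and> (\<forall>x y z. B (m x y) z = B x (m y z))"

definition is_ideal :: "('k::field \<Rightarrow> 'v::ab_group_add \<Rightarrow> 'v) \<Rightarrow> ('v \<Rightarrow> 'v \<Rightarrow> 'v) \<Rightarrow> 'v set \<Rightarrow> bool" where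
  "is_ideal smult m I \<longleftrightarrow> Modules.module.subspace smult I \<and> (\<forall>x. \<forall>i\<in>I. m x i \<in> I)"

definition B_irreducible ::
  "('k::field_char_0 \<Rightarrow> 'v::ab_group_add \<Rightarrow> 'v) \<Rightarrow> ('v \<Rightarrow> 'v \<Rightarrow> 'v) \<Rightarrow> ('v \<Rightarrow> 'v \<Rightarrow> 'k) \<Rightarrow> bool" where
  "B_irreducible smult m B \<longleftrightarrow>
     \<not> (\<exists>I. is_ideal smult m I \<and> I \<noteq> {0} \<and> I \<noteq> UNIV
            \<and> (\<forall>x\<in>I. (\<forall>y\<in>I. B x y = 0) \<longrightarrow> x = 0))"

definition dual_bases ::
  "('k::field \<Rightarrow> 'v::ab_group_add \<Rightarrow> 'v) \<Rightarrow> ('v \<Rightarrow> 'v \<Rightarrow> 'k) \<Rightarrow> nat \<Rightarrow> (nat \<Rightarrow> 'v) \<Rightarrow> (nat \<Rightarrow> 'v) \<Rightarrow> bool" where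
  "dual_bases smult B n e e' \<longleftrightarrow>
     inj_on e {..<n} \<and> \<not> Modules.module.dependent smult (e ` {..<n}) \<and> Modules.module.span smult (e ` {..<n}) = UNIV
   \<and> inj_on e' {..<n} \<and> \<not> Modules.module.dependent smult (e' ` {..<n}) \<and> Modules.module.span smult (e' ` {..<n}) = UNIV
   \<and> (\<forall>i<n. \<forall>j<n. B (e i) (e' j) = (if i = j then 1 else 0))"

definition casimir_element :: "('v::ab_group_add \<Rightarrow> 'v \<Rightarrow> 'v) \<Rightarrow> nat \<Rightarrow> (nat \<Rightarrow> 'v) \<Rightarrow> (nat \<Rightarrow> 'v) \<Rightarrow> 'v" where
  "casimir_element m n e e' = (\<Sum>i<n. m (e i) (e' i))"

definition casimir_operator :: "('v::ab_group_add \<Rightarrow> 'v \<Rightarrow> 'v) \<Rightarrow> nat \<Rightarrow> (nat \<Rightarrow> 'v) \<Rightarrow> (nat \<Rightarrow> 'v) \<Rightarrow> 'v \<Rightarrow> 'v" where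
  "casimir_operator m n e e' = (\<lambda>x. m x (casimir_element m n e e'))"

definition nilpotent_op :: "('v::zero \<Rightarrow> 'v) \<Rightarrow> bool" where
  "nilpotent_op f \<longleftrightarrow> (\<exists>k. (f ^^ k) = (\<lambda>_. 0))"

end

theory Submission imports Defs begin

lemma lin_add: "Vector_Spaces.linear s1 s2 f \<Longrightarrow> f (a + b) = f a + f b"
  by (rule module_hom.add[OF module_hom_linearI])
lemma lin_scale: "Vector_Spaces.linear s1 s2 f \<Longrightarrow> f (s1 c a) = s2 c (f a)"
  by (rule module_hom.scale[OF module_hom_linearI])
lemma lin_zero: "Vector_Spaces.linear s1 s2 f \<Longrightarrow> f 0 = 0"
  by (rule module_hom.zero[OF module_hom_linearI])
lemma lin_neg: "Vector_Spaces.linear s1 s2 f \<Longrightarrow> f (- a) = - f a"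
  by (rule module_hom.neg[OF module_hom_linearI])
lemma lin_diff: "Vector_Spaces.linear s1 s2 f \<Longrightarrow> f (a - b) = f a - f b"
  by (rule module_hom.diff[OF module_hom_linearI])
lemma lin_sum: "Vector_Spaces.linear s1 s2 f \<Longrightarrow> f (sum g S) = (\<Sum>a\<in>S. f (g a))"
  by (rule module_hom.sum[OF module_hom_linearI])

lemma tri_lin1:
  fixes T :: "'v::ab_group_add \<Rightarrow> 'v \<Rightarrow> 'v \<Rightarrow> 'v"
  assumes a1: "\<And>a b u v. T (a + b) u v = T a u v + T b u v"
    and a2: "\<And>a b u v. T u (a + b) v = T u a v + T u b v"
    and a3: "\<And>a b u v. T u v (a + b) = T u v a + T u v b"
    and n1: "\<And>a u v. T (- a) u v = - T a u v"
    and n2: "\<And>a u v. T u (- a) v = - T u a v"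
    and n3: "\<And>a u v. T u v (- a) = - T u v a"
  shows "T (x+w) (x+w) (x+w) - T (x-w) (x-w) (x-w) = 
     (T w x x + T x w x + T x x w) + (T w x x + T x w x + T x x w) + T w w w + T w w w"
  apply (simp only: a1 a2 a3 diff_conv_add_uminus)
  apply (simp only: n1 n2 n3 minus_minus)
  apply (simp only: minus_add_distrib)
  apply (simp add: algebra_simps)
  done

lemma tri_lin2:
  fixes T :: "'v::ab_group_add \<Rightarrow> 'v \<Rightarrow> 'v \<Rightarrow> 'v"
  assumes a1: "\<And>a b u v. T (a + b) u v = T a u v + T b u v"
    and a2: "\<And>a b u v. T u (a + b) v = T u a v + T u b v"
    and a3: "\<And>a b u v. T u v (a + b) = T u v a + T u v b"
    and n1: "\<And>a u v. T (- a) u v = - T a u v"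
    and n2: "\<And>a u v. T u (- a) v = - T u a v"
    and n3: "\<And>a u v. T u v (- a) = - T u v a"
  shows "(T w (a+b) (a+b) + T (a+b) w (a+b) + T (a+b) (a+b) w) - (T w (a-b) (a-b) + T (a-b) w (a-b) + T (a-b) (a-b) w) = 
     (T w a b + T w b a + T a w b + T b w a + T a b w + T b a w) + (T w a b + T w b a + T a w b + T b w a + T a b w + T b a w)"
  apply (simp only: a1 a2 a3 diff_conv_add_uminus)
  apply (simp only: n1 n2 n3 minus_minus)
  apply (simp only: minus_add_distrib)
  apply (simp add: algebra_simps)
  done

locale pej = vector_space smult
  for smult :: "'k::field_char_0 \<Rightarrow> 'v::ab_group_add \<Rightarrow> 'v" +
  fixes m :: "'v \<Rightarrow> 'v \<Rightarrow> 'v" and B :: "'v \<Rightarrow> 'v \<Rightarrow> 'k"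
    and n :: nat and e e' :: "nat \<Rightarrow> 'v"
  assumes mlin: "\<And>x. Vector_Spaces.linear smult smult (m x)"
    and comm: "\<And>x y. m x y = m y x"
    and jor: "\<And>x y. m x (m y (m x x)) = m (m x y) (m x x)"
    and Blin: "\<And>x. Vector_Spaces.linear smult (*) (B x)"
    and Bsym: "\<And>x y. B x y = B y x"
    and nondeg: "\<And>x. (\<And>y. B x y = 0) \<Longrightarrow> x = 0"
    and inv: "\<And>x y z. B (m x y) z = B x (m y z)"
    and espan: "span (e ` {..<n}) = UNIV"
    and eind: "independent (e ` {..<n})"
    and dual: "\<And>i j. i < n \<Longrightarrow> j < n \<Longrightarrow> B (e i) (e' j) = (if i = j then 1 else 0)"
begin

lemma madd: "m x (a + b) = m x a + m x b" by (rule lin_add[OF mlin])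
lemma maddl: "m (a + b) x = m a x + m b x"
  by (subst (1 2 3) comm) (rule madd)
lemma mneg: "m x (- a) = - m x a" by (rule lin_neg[OF mlin])
lemma mnegl: "m (- a) x = - m a x"
  by (subst (1 2) comm) (rule mneg)
lemma mdiff: "m x (a - b) = m x a - m x b" by (rule lin_diff[OF mlin])
lemma mdiffl: "m (a - b) x = m a x - m b x"
  by (subst (1 2 3) comm) (rule mdiff)
lemma mzero: "m x 0 = 0" by (rule lin_zero[OF mlin])
lemma mzerol: "m 0 x = 0"
  by (subst comm) (rule mzero)
lemma mscale: "m x (smult c a) = smult c (m x a)" by (rule lin_scale[OF mlin])
lemma msum: "m x (sum g S) = (\<Sum>a\<in>S. m x (g a))" by (rule lin_sum[OF mlin])

lemma Badd: "B x (a + b) = B x a + B x b" by (rule lin_add[OF Blin])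
lemma Baddl: "B (a + b) x = B a x + B b x"
  by (subst (1 2 3) Bsym) (rule Badd)
lemma Bdiff: "B x (a - b) = B x a - B x b" by (rule lin_diff[OF Blin])
lemma Bdiffl: "B (a - b) x = B a x - B b x"
  by (subst (1 2 3) Bsym) (rule Bdiff)
lemma Bzero: "B x 0 = 0" by (rule lin_zero[OF Blin])
lemma Bzerol: "B 0 x = 0"
  by (subst Bsym) (rule Bzero)
lemma Bscale: "B x (smult c a) = c * B x a" using lin_scale[OF Blin] by simp
lemma Bsum: "B x (sum g S) = (\<Sum>a\<in>S. B x (g a))" by (rule lin_sum[OF Blin])
lemma Bsuml: "B (sum g S) x = (\<Sum>a\<in>S. B (g a) x)"
  by (subst Bsym) (simp only: Bsum Bsym[of x])

lemma half: "(v::'v) + v = 0 \<Longrightarrow> v = 0"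
proof -
  assume h: "v + v = 0"
  have "v = smult (1/2 + 1/2) v" by simp
  also have "\<dots> = smult (1/2) v + smult (1/2) v" by (rule scale_left_distrib)
  also have "\<dots> = smult (1/2) (v + v)" by (rule scale_right_distrib[symmetric])
  also have "\<dots> = 0" by (simp add: h)
  finally show "v = 0" .
qed

lemma nondeg_eq: "(\<And>y. B u y = B v y) \<Longrightarrow> u = v"
proof -
  assume h: "\<And>y. B u y = B v y"
  have "u - v = 0" by (rule nondeg) (simp add: Bdiffl h)
  then show ?thesis by simp
qed

lemma expand: "v = (\<Sum>j<n. smult (B (e j) v) (e' j))"
proof -
  define w where "w = v - (\<Sum>j<n. smult (B (e j) v) (e' j))"
  have ew: "B (e i) w = 0" if "i < n" for i
  proof -
    have "B (e i) w = B (e i) v - (\<Sum>j<n. B (e j) v * B (e i) (e' j))"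
      by (simp add: w_def Bdiff Bsum Bscale)
    also have "(\<Sum>j<n. B (e j) v * B (e i) (e' j)) = (\<Sum>j<n. if j = i then B (e j) v else 0)"
      by (rule sum.cong) (use that in \<open>auto simp: dual\<close>)
    also have "\<dots> = B (e i) v" using that by simp
    finally show ?thesis by simp
  qed
  have "x \<in> {x. B x w = 0}" for x
  proof -
    have "x \<in> span (e ` {..<n})" by (simp add: espan)
    then show ?thesis
    proof (rule span_induct)
      show "subspace (Collect (\<lambda>x. x \<in> {x. B x w = 0}))"
        unfolding subspace_def by (simp add: Baddl Bzerol Bscale[of w, unfolded Bsym[of w]])
      show "\<And>x. x \<in> e ` {..<n} \<Longrightarrow> x \<in> {x. B x w = 0}" using ew by auto
    qed
  qed
  then have "w = 0" by (intro nondeg) (simp add: Bsym)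
  then show ?thesis by (simp add: w_def)
qed

lemma J2: "m (m (m a b) y) w = m (m y a) (m b w) + m (m y b) (m a w) + m (m a b) (m y w)
              - m a (m y (m b w)) - m b (m y (m a w))"
proof -
  define T where "T u1 u2 u3 = m u1 (m y (m u2 u3)) - m (m u1 y) (m u2 u3)" for u1 u2 u3
  have T3: "T x x x = 0" for x by (simp add: T_def jor)
  have a1: "\<And>a b u v. T (a + b) u v = T a u v + T b u v"
    by (simp add: T_def maddl)
  have a2: "\<And>a b u v. T u (a + b) v = T u a v + T u b v"
    by (simp add: T_def maddl madd)
  have a3: "\<And>a b u v. T u v (a + b) = T u v a + T u v b"
    by (simp add: T_def maddl madd)
  have n1: "\<And>a u v. T (- a) u v = - T a u v"
    by (simp add: T_def mnegl)
  have n2: "\<And>a u v. T u (- a) v = - T u a v"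
    by (simp add: T_def mnegl mneg)
  have n3: "\<And>a u v. T u v (- a) = - T u v a"
    by (simp add: T_def mnegl mneg)
  have C0: "T w x x + T x w x + T x x w = 0" for x w
  proof -
    have "(T w x x + T x w x + T x x w) + (T w x x + T x w x + T x x w) + T w w w + T w w w
       = T (x+w) (x+w) (x+w) - T (x-w) (x-w) (x-w)"
      by (rule tri_lin1[of T x w, symmetric, OF a1 a2 a3 n1 n2 n3])
    also have "\<dots> = 0" by (simp only: T3 diff_self)
    finally have "(T w x x + T x w x + T x x w) + (T w x x + T x w x + T x x w) = 0"
      by (simp only: T3 add_0_right)
    then show ?thesis by (rule half)
  qed
  have S0: "T w a b + T w b a + T a w b + T b w a + T a b w + T b a w = 0"
  proof (rule half)
    have "(T w a b + T w b a + T a w b + T b w a + T a b w + T b a w) + (T w a b + T w b a + T a w b + T b w a + T a b w + T b a w)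
       = (T w (a+b) (a+b) + T (a+b) w (a+b) + T (a+b) (a+b) w) - (T w (a-b) (a-b) + T (a-b) w (a-b) + T (a-b) (a-b) w)"
      by (rule tri_lin2[of T w a b, symmetric, OF a1 a2 a3 n1 n2 n3])
    also have "\<dots> = 0" by (simp only: C0 diff_self)
    finally show "(T w a b + T w b a + T a w b + T b w a + T a b w + T b a w) + (T w a b + T w b a + T a w b + T b w a + T a b w + T b a w) = 0" .
  qed
  have sw: "T u v z = T u z v" for u v z by (simp add: T_def comm[of v z])
  have "(T w a b + T a w b + T b a w) + (T w a b + T a w b + T b a w) = 0"
    using S0 sw[of w b a] sw[of b w a] sw[of a b w] by (simp add: algebra_simps)
  then have Z: "T w a b + T a w b + T b a w = 0" by (rule half)
  have c1: "m (m (m a b) y) w = m w (m y (m a b))"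
    by (simp only: comm[of "m y (m a b)" w] comm[of "m a b" y])
  have c2: "m (m y a) (m b w) = m (m a y) (m w b)" by (simp only: comm[of y a] comm[of b w])
  have c3: "m (m y b) (m a w) = m (m b y) (m a w)" by (simp only: comm[of y b])
  have c4: "m (m a b) (m y w) = m (m w y) (m a b)" by (simp only: comm[of "m a b" "m w y"] comm[of y w])
  have c5: "m a (m y (m b w)) = m a (m y (m w b))" by (simp only: comm[of b w])
  show ?thesis unfolding c1 c2 c3 c4 c5 using Z by (simp add: T_def algebra_simps)
qed

definition tr :: "('v \<Rightarrow> 'v) \<Rightarrow> 'k" where "tr f = (\<Sum>i<n. B (e i) (f (e' i)))"

lemma tr_key:
  assumes f: "Vector_Spaces.linear smult smult f"
  shows "tr (\<lambda>w. f (g w)) = (\<Sum>i<n. \<Sum>j<n. B (e j) (g (e' i)) * B (e i) (f (e' j)))"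
proof -
  have "B (e i) (f (g (e' i))) = (\<Sum>j<n. B (e j) (g (e' i)) * B (e i) (f (e' j)))" for i
  proof -
    have "f (g (e' i)) = f (\<Sum>j<n. smult (B (e j) (g (e' i))) (e' j))"
      by (rule arg_cong[where f=f], rule expand)
    also have "\<dots> = (\<Sum>j<n. smult (B (e j) (g (e' i))) (f (e' j)))"
      by (simp add: lin_sum[OF f] lin_scale[OF f])
    finally show ?thesis by (simp add: Bsum Bscale)
  qed
  then show ?thesis by (simp add: tr_def)
qed

lemma tr_swap:
  assumes f: "Vector_Spaces.linear smult smult f" and g: "Vector_Spaces.linear smult smult g"
  shows "tr (\<lambda>w. f (g w)) = tr (\<lambda>w. g (f w))"
  unfolding tr_key[OF f] tr_key[OF g]
  by (subst sum.swap) (simp add: mult.commute)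

lemma tr_add: "tr (\<lambda>w. f w + g w) = tr f + tr g"
  by (simp add: tr_def Badd sum.distrib)
lemma tr_diff: "tr (\<lambda>w. f w - g w) = tr f - tr g"
  by (simp add: tr_def Bdiff sum_subtractf)

lemma comp_lin: "Vector_Spaces.linear smult smult f \<Longrightarrow> Vector_Spaces.linear smult smult g
   \<Longrightarrow> Vector_Spaces.linear smult smult (\<lambda>w. f (g w))"
  using Vector_Spaces.linear_compose[of smult smult g smult f] by (simp add: comp_def)

lemma trJ2: "tr (m (m (m a b) y)) = tr (\<lambda>w. m (m y a) (m b w)) + tr (\<lambda>w. m (m y b) (m a w))
   + tr (\<lambda>w. m (m a b) (m y w)) - tr (\<lambda>w. m a (m y (m b w))) - tr (\<lambda>w. m b (m y (m a w)))"
proof -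
  have "m (m (m a b) y) = (\<lambda>w. ((m (m y a) (m b w) + m (m y b) (m a w)) + m (m a b) (m y w)
           - m a (m y (m b w))) - m b (m y (m a w)))"
    by (rule ext) (rule J2)
  then show ?thesis by (simp only: tr_diff tr_add)
qed

lemma trsym: "tr (m (m (m z x) y)) = tr (m (m (m z y) x))"
proof -
  have t1: "tr (\<lambda>w. m z (m y (m x w))) = tr (\<lambda>w. m y (m x (m z w)))"
    using tr_swap[of "m z" "\<lambda>w. m y (m x w)"] by (simp add: mlin comp_lin)
  have t2: "tr (\<lambda>w. m x (m y (m z w))) = tr (\<lambda>w. m z (m x (m y w)))"
    using tr_swap[of "\<lambda>w. m x (m y w)" "m z"] by (simp add: mlin comp_lin)
  show ?thesis unfolding trJ2 t1 t2
    by (simp only: comm[of y z] comm[of y x] comm[of z x]) (simp add: algebra_simps)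
qed

definition c where "c = (\<Sum>i<n. m (e i) (e' i))"

lemma BDc: "B (m c x) y = tr (m (m x y))"
proof -
  have "B (m c x) y = B c (m x y)" by (rule inv)
  also have "\<dots> = (\<Sum>i<n. B (e i) (m (e' i) (m x y)))" by (simp add: c_def Bsuml inv)
  also have "\<dots> = tr (m (m x y))" unfolding tr_def
    by (rule sum.cong) (simp_all only: comm[of "e' _" "m x y"])
  finally show ?thesis .
qed

lemma Dcomm: "m c (m z x) = m z (m c x)"
proof (rule nondeg_eq)
  fix y
  have "B (m c (m z x)) y = tr (m (m (m z x) y))" by (rule BDc)
  also have "\<dots> = tr (m (m (m z y) x))" by (rule trsym)
  also have "\<dots> = tr (m (m x (m z y)))" by (simp only: comm[of "m z y" x])
  also have "\<dots> = B (m c x) (m z y)" by (rule BDc[symmetric])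
  also have "\<dots> = B (m (m c x) z) y" by (rule inv[symmetric])
  also have "\<dots> = B (m z (m c x)) y" by (simp only: comm[of "m c x" z])
  finally show "B (m c (m z x)) y = B (m z (m c x)) y" .
qed

lemma Dsym: "B (m c x) y = B x (m c y)"
proof -
  have "B (m c x) y = B (m x c) y" by (simp only: comm[of c x])
  also have "\<dots> = B x (m c y)" by (rule inv)
  finally show ?thesis .
qed

abbreviation P where "P k \<equiv> (m c) ^^ k"

lemma Plin: "Vector_Spaces.linear smult smult (P k)"
proof (induction k)
  case 0 show ?case by (simp add: linear_ident)
next
  case (Suc k) show ?case
    using comp_lin[OF mlin Suc] by (simp add: comp_def)
qed

lemma Pcomm: "P k (m z x) = m z (P k x)"
  by (induction k) (simp_all add: Dcomm)

lemma Psym: "B (P k x) y = B x (P k y)"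
proof (induction k arbitrary: y)
  case 0 show ?case by simp
next
  case (Suc k)
  have "B (P (Suc k) x) y = B (m c (P k x)) y" by simp
  also have "\<dots> = B (P k x) (m c y)" by (rule Dsym)
  also have "\<dots> = B x (P k (m c y))" by (rule Suc)
  also have "\<dots> = B x (P (Suc k) y)" by (simp add: funpow_swap1)
  finally show ?case .
qed

sublocale fd: finite_dimensional_vector_space smult "e ` {..<n}"
  by unfold_locales (simp_all add: eind espan)

lemma fitting:
  assumes irr: "\<And>I. is_ideal smult m I \<Longrightarrow> (\<forall>x\<in>I. (\<forall>y\<in>I. B x y = 0) \<longrightarrow> x = 0) \<Longrightarrow> I = {0} \<or> I = UNIV"
  shows "nilpotent_op (m c) \<or> bij (m c)"
proof -
  define R where "R k = range (P k)" for k
  have Rsub: "subspace (R k)" for k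
    unfolding R_def by (rule module_hom.subspace_image[OF module_hom_linearI[OF Plin]]) (rule subspace_UNIV)
  have Ranti: "R j \<subseteq> R i" if "i \<le> j" for i j
  proof
    fix x assume "x \<in> R j"
    then obtain y where y: "x = P j y" by (auto simp: R_def)
    have "j = i + (j - i)" using that by simp
    then have "P j y = P i (P (j - i) y)" by (metis funpow_add comp_apply)
    then show "x \<in> R i" by (simp add: R_def y)
  qed
  obtain N where N: "\<And>k. dim (R N) \<le> dim (R k)"
    using ex_has_least_nat[of "\<lambda>_. True" 0 "\<lambda>k. dim (R k)"] by auto
  define M where "M = Suc N"
  have "dim (R M) \<le> dim (R N)" by (rule fd.dim_subset) (rule Ranti, simp add: M_def)
  also have "\<dots> \<le> dim (R (M + M))" by (rule N)
  finally have "R (M + M) = R M"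
    by (intro fd.subspace_dim_equal Rsub Ranti) simp_all
  then have dec: "\<exists>y. P M (x - P M y) = 0" for x
  proof -
    assume eq: "R (M + M) = R M"
    have "P M x \<in> R M" by (simp add: R_def)
    then have "P M x \<in> R (M + M)" by (simp add: eq)
    then obtain y where "P M x = P (M + M) y" by (auto simp: R_def)
    then have "P M x = P M (P M y)" by (simp add: funpow_add)
    then show ?thesis by (intro exI[of _ y]) (simp add: lin_diff[OF Plin])
  qed
  define K where "K = {x. P M x = 0}"
  have "is_ideal smult m K"
    unfolding is_ideal_def K_def
  proof
    show "subspace {x. P M x = 0}" by (rule module_hom.subspace_kernel[OF module_hom_linearI[OF Plin]])
    show "\<forall>x. \<forall>i\<in>{x. P M x = 0}. m x i \<in> {x. P M x = 0}" by (simp add: Pcomm mzero)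
  qed
  moreover have "\<forall>x\<in>K. (\<forall>y\<in>K. B x y = 0) \<longrightarrow> x = 0"
  proof (intro ballI impI)
    fix u assume uK: "u \<in> K" and h: "\<forall>y\<in>K. B u y = 0"
    show "u = 0"
    proof (rule nondeg)
      fix x
      obtain y where y: "P M (x - P M y) = 0" using dec by blast
      have "B u x = B u (x - P M y) + B u (P M y)" by (simp add: Bdiff)
      also have "B u (x - P M y) = 0" using h y by (simp add: K_def)
      also have "B u (P M y) = B (P M u) y" by (rule Psym[symmetric])
      also have "\<dots> = 0" using uK by (simp add: K_def Bzerol)
      finally show "B u x = 0" by simp
    qed
  qed
  ultimately have "K = {0} \<or> K = UNIV" by (rule irr)
  then show ?thesis
  proof
    assume "K = UNIV"
    then have "P M = (\<lambda>_. 0)" by (auto simp: K_def)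
    then show ?thesis unfolding nilpotent_op_def by blast
  next
    assume K0: "K = {0}"
    have "inj (m c)"
    proof (rule injI)
      fix x y assume "m c x = m c y"
      then have "m c (x - y) = 0" by (simp add: mdiff)
      then have "P M (x - y) = 0" by (simp add: M_def funpow_swap1 lin_zero[OF Plin])
      then have "x - y \<in> K" by (simp add: K_def)
      then show "x = y" using K0 by simp
    qed
    moreover have "surj (m c)"
    proof
      show "range (m c) \<subseteq> UNIV" by simp
      show "UNIV \<subseteq> range (m c)"
      proof
        fix x
        obtain y where y: "P M (x - P M y) = 0" using dec by blast
        then have "x - P M y \<in> K" by (simp add: K_def)
        then have "x = P M y" using K0 by simp
        then have "x = m c (P N y)" by (simp add: M_def)
        then show "x \<in> range (m c)" by blast
      qed
    qed
    ultimately show ?thesis by (simp add: bij_def)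
  qed
qed

end

theorem mainTheorem15:
  fixes smult :: "'k::field_char_0 \<Rightarrow> 'v::ab_group_add \<Rightarrow> 'v"
    and m :: "'v \<Rightarrow> 'v \<Rightarrow> 'v"
    and B :: "'v \<Rightarrow> 'v \<Rightarrow> 'k"
    and n :: nat and e e' :: "nat \<Rightarrow> 'v"
  assumes "pseudo_euclidean_jordan smult m B"
    and "B_irreducible smult m B"
    and "dual_bases smult B n e e'"
  shows "nilpotent_op (casimir_operator m n e e') \<or> bij (casimir_operator m n e e')"
proof -
  have vs: "vector_space smult"
    using assms(1) by (simp add: pseudo_euclidean_jordan_def jordan_algebra_def fin_dim_space_def)
  have h1: "jordan_algebra smult m" "bilinear_form smult B" "\<forall>x y. B x y = B y x"
    "\<forall>x. (\<forall>y. B x y = 0) \<longrightarrow> x = 0" "\<forall>x y z. B (m x y) z = B x (m y z)"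
    using assms(1) unfolding pseudo_euclidean_jordan_def by blast+
  have h2: "\<forall>x. Vector_Spaces.linear smult smult (m x)" "\<forall>x y. m x y = m y x"
    "\<forall>x y. m x (m y (m x x)) = m (m x y) (m x x)"
    using h1(1) unfolding jordan_algebra_def bilinear_map_def by simp_all
  have h3: "\<forall>x. Vector_Spaces.linear smult (*) (B x)"
    using h1(2) unfolding bilinear_form_def by simp
  have h4: "Modules.module.span smult (e ` {..<n}) = UNIV" "\<not> Modules.module.dependent smult (e ` {..<n})"
    "\<forall>i<n. \<forall>j<n. B (e i) (e' j) = (if i = j then 1 else 0)"
    using assms(3) unfolding dual_bases_def by blast+
  have "pej smult m B n e e'"
  proof (rule pej.intro[OF vs pej_axioms.intro])
    show "\<And>x. Vector_Spaces.linear smult smult (m x)" using h2(1) by blast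
    show "\<And>x y. m x y = m y x" using h2(2) by blast
    show "\<And>x y. m x (m y (m x x)) = m (m x y) (m x x)" using h2(3) by blast
    show "\<And>x. Vector_Spaces.linear smult (*) (B x)" using h3 by blast
    show "\<And>x y. B x y = B y x" using h1(3) by blast
    show "\<And>x. (\<And>y. B x y = 0) \<Longrightarrow> x = 0" using h1(4) by blast
    show "\<And>x y z. B (m x y) z = B x (m y z)" using h1(5) by blast
    show "Modules.module.span smult (e ` {..<n}) = UNIV" using h4(1) .
    show "\<not> Modules.module.dependent smult (e ` {..<n})" using h4(2) .
    show "\<And>i j. i < n \<Longrightarrow> j < n \<Longrightarrow> B (e i) (e' j) = (if i = j then 1 else 0)" using h4(3) by blast
  qed
  then interpret pej smult m B n e e' .
  have co: "casimir_operator m n e e' = m c"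
    by (rule ext) (simp add: casimir_operator_def casimir_element_def c_def comm)
  have "nilpotent_op (m c) \<or> bij (m c)"
  proof (rule fitting)
    fix I assume "is_ideal smult m I" "\<forall>x\<in>I. (\<forall>y\<in>I. B x y = 0) \<longrightarrow> x = 0"
    then show "I = {0} \<or> I = UNIV" using assms(2) unfolding B_irreducible_def by blast
  qed
  then show ?thesis by (simp add: co)
qed

end
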